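(* For integers $n\ge0$ and $s,r\ge2$, $$\sum_{a+b=n}\zeta^\star(\{s\}^a)\,\zeta(sb+r)=\sum_{a+b=n}\zeta^\star(\{s\}^a,r,\{s\}^b),$$ the sums being over nonnegative integers $a,b$ with $a+b=n$.
   Context: $\zeta^\star(\alpha_1,\ldots,\alpha_k)=\sum_{1\le k_1\le\cdots\le k_k}k_1^{-\alpha_1}\cdots k_k^{-\alpha_k}$, with the convention $\zeta^\star(\{s\}^0)=1$; $\{s\}^a$ denotes $a$ repetitions of $s$; $\zeta$ is the Riemann zeta function. *)

theory Defs
  imports "HOL-Analysis.Analysis"
begin

definition rzeta :: "nat \<Rightarrow> real" where
  "rzeta s = (\<Sum>n. 1 / (real (Suc n)) ^ s)"

(* For the empty list this gives 1 (the single empty tuple, empty product). *)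
definition zeta_star :: "nat list \<Rightarrow> real" where
  "zeta_star as =
     infsum (\<lambda>ks. \<Prod>i<length as. 1 / (real (ks ! i)) ^ (as ! i))
            {ks. length ks = length as \<and> sorted ks \<and> (\<forall>k\<in>set ks. 0 < k)}"

end

theory Submission
  imports Defs
begin

lemma rzeta_has_sum:
  assumes "k \<ge> 2"
  shows "((\<lambda>m::nat. 1 / real m ^ k) has_sum rzeta k) {m. 0 < m}"
proof -
  have "summable (\<lambda>n. inverse (real n ^ k))" by (rule inverse_power_summable[OF assms])
  hence "summable (\<lambda>n. 1 / real (Suc n) ^ k)"
    using summable_Suc_iff[where f="\<lambda>n. inverse (real n ^ k)"] by (simp add: field_simps)
  hence "(\<lambda>n. 1 / real (Suc n) ^ k) sums rzeta k" unfolding rzeta_def by (rule summable_sums)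
  hence "((\<lambda>n. 1 / real (Suc n) ^ k) has_sum rzeta k) UNIV"
    by (rule sums_nonneg_imp_has_sum) simp
  hence "(((\<lambda>m::nat. 1 / real m ^ k) \<circ> Suc) has_sum rzeta k) UNIV" by (simp add: o_def)
  hence "((\<lambda>m::nat. 1 / real m ^ k) has_sum rzeta k) (Suc ` UNIV)"
    by (subst has_sum_reindex) auto
  moreover have "Suc ` UNIV = {m. 0 < m}" using gr0_implies_Suc by auto
  ultimately show ?thesis by simp
qed

lemma has_sum_product_nonneg:
  fixes f :: "'a \<Rightarrow> real" and g :: "'b \<Rightarrow> real"
  assumes f0: "\<And>x. x \<in> A \<Longrightarrow> f x \<ge> 0" and g0: "\<And>y. y \<in> B \<Longrightarrow> g y \<ge> 0"
    and hf: "(f has_sum x) A" and hg: "(g has_sum y) B"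
  shows "((\<lambda>(p,q). f p * g q) has_sum (x * y)) (A \<times> B)"
proof -
  have sm: "(\<lambda>(p,q). f p * g q) summable_on (A \<times> B)"
  proof (rule nonneg_bdd_above_summable_on)
    show "\<And>z. z \<in> A \<times> B \<Longrightarrow> 0 \<le> (case z of (p, q) \<Rightarrow> f p * g q)"
      using f0 g0 by auto
    show "bdd_above (sum (\<lambda>(p,q). f p * g q) ` {F. F \<subseteq> A \<times> B \<and> finite F})"
    proof (rule bdd_aboveI2)
      fix F assume F: "F \<in> {F. F \<subseteq> A \<times> B \<and> finite F}"
      hence fin: "finite F" and sub: "F \<subseteq> A \<times> B" by auto
      have "sum (\<lambda>(p,q). f p * g q) F \<le> sum (\<lambda>(p,q). f p * g q) (fst ` F \<times> snd ` F)"
      proof (rule sum_mono2)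
        show "finite (fst ` F \<times> snd ` F)" using fin by simp
        show "F \<subseteq> fst ` F \<times> snd ` F" by force
        show "\<And>b. b \<in> fst ` F \<times> snd ` F - F \<Longrightarrow> 0 \<le> (case b of (p, q) \<Rightarrow> f p * g q)"
          using sub f0 g0 by (auto intro!: mult_nonneg_nonneg)
      qed
      also have "\<dots> = sum f (fst ` F) * sum g (snd ` F)"
        by (simp add: sum_product sum.cartesian_product)
      also have "\<dots> \<le> x * y"
      proof (rule mult_mono)
        show "sum f (fst ` F) \<le> x" using fin sub f0 by (intro finite_sum_le_has_sum[OF hf]) auto
        show "sum g (snd ` F) \<le> y" using fin sub g0 by (intro finite_sum_le_has_sum[OF hg]) auto
        show "0 \<le> x" using f0 by (intro has_sum_nonneg[OF hf]) auto
        show "0 \<le> sum g (snd ` F)" using sub g0 by (intro sum_nonneg) auto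
      qed
      finally show "sum (\<lambda>(p,q). f p * g q) F \<le> x * y" .
    qed
  qed
  have "infsum (\<lambda>p. infsum (\<lambda>q. f p * g q) B) A = infsum (\<lambda>(p,q). f p * g q) (A \<times> B)"
    using sm by (intro infsum_Sigma'_banach) simp
  moreover have "infsum (\<lambda>p. infsum (\<lambda>q. f p * g q) B) A = x * y"
  proof -
    have "infsum (\<lambda>p. infsum (\<lambda>q. f p * g q) B) A = infsum (\<lambda>p. f p * y) A"
      using hg by (intro infsum_cong) (simp add: infsum_cmult_right has_sum_iff)
    also have "\<dots> = x * y" using hf by (simp add: infsum_cmult_left has_sum_iff)
    finally show ?thesis .
  qed
  ultimately show ?thesis using sm by (simp add: has_sum_iff)
qed


definition Wt :: "nat \<Rightarrow> nat list \<Rightarrow> real" where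
  "Wt s xs = prod_list (map (\<lambda>k. 1 / real k ^ s) xs)"

lemma Wt_simps[simp]: "Wt s [] = 1" "Wt s (x # xs) = 1 / real x ^ s * Wt s xs"
  "Wt s (xs @ ys) = Wt s xs * Wt s ys" "Wt s (replicate k m) = (1 / real m ^ s) ^ k"
  by (simp_all add: Wt_def prod_list_replicate)

lemma Wt_nonneg: "Wt s xs \<ge> 0"
  unfolding Wt_def by (induction xs) auto

lemma zipprod:
  "length ks = length as \<Longrightarrow>
   (\<Prod>i<length as. 1 / real (ks ! i) ^ (as ! i)) = prod_list (map (\<lambda>(e,k). 1 / real k ^ e) (zip as ks))"
proof (induction as arbitrary: ks)
  case Nil then show ?case by simp
next
  case (Cons e as)
  then obtain k ks' where ks: "ks = k # ks'" and l: "length ks' = length as" by (cases ks) auto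
  show ?case using Cons.IH[OF l] by (simp add: ks prod.lessThan_Suc_shift del: prod.lessThan_Suc)
qed

lemma map_zip_rep: "length xs = a \<Longrightarrow>
   map (\<lambda>(e,k). 1 / real k ^ e) (zip (replicate a s) xs) = map (\<lambda>k. 1 / real k ^ s) xs"
  by (simp add: zip_replicate1)

lemma W1: "length ks = a \<Longrightarrow> (\<Prod>i<length (replicate a s). 1 / real (ks ! i) ^ (replicate a s ! i)) = Wt s ks"
  by (subst zipprod) (simp_all add: map_zip_rep Wt_def)

lemma W2: "length xs = a \<Longrightarrow> length ys = b \<Longrightarrow>
  (\<Prod>i<length (replicate a s @ [r] @ replicate b s).
       1 / real ((xs @ [m] @ ys) ! i) ^ ((replicate a s @ [r] @ replicate b s) ! i))
   = Wt s xs * (1 / real m ^ r) * Wt s ys"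
  by (subst zipprod) (simp_all add: zip_append map_zip_rep Wt_def)

lemma split1: "sorted C \<Longrightarrow> filter (\<lambda>x. x \<le> m) C @ filter (\<lambda>x. m < x) C = C"
proof (induction C)
  case Nil then show ?case by simp
next
  case (Cons c C)
  show ?case
  proof (cases "c \<le> m")
    case True then show ?thesis using Cons by auto
  next
    case False
    hence "\<forall>z\<in>set C. m < z" using Cons.prems by fastforce
    hence "filter (\<lambda>x. x \<le> m) C = []" "filter (\<lambda>x. m < x) C = C"
      by (auto simp: filter_empty_conv filter_id_conv)
    then show ?thesis using False by simp
  qed
qed

lemma split2: "sorted ys \<Longrightarrow> \<forall>y\<in>set ys. m \<le> y \<Longrightarrow>
   replicate (length (filter (\<lambda>y. y = m) ys)) m @ filter (\<lambda>y. m < y) ys = ys"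
proof (induction ys)
  case Nil then show ?case by simp
next
  case (Cons y ys)
  show ?case
  proof (cases "y = m")
    case True then show ?thesis using Cons by auto
  next
    case False
    hence "m < y" using Cons.prems by auto
    hence "\<forall>z\<in>set ys. m < z" using Cons.prems by auto
    hence "filter (\<lambda>y. y = m) ys = []" "filter (\<lambda>y. m < y) ys = ys"
      by (auto simp: filter_empty_conv filter_id_conv)
    then show ?thesis using False \<open>m < y\<close> by simp
  qed
qed

lemma Wt_filter: "Wt s (filter (\<lambda>y. y \<noteq> m) ys) * (1 / real m ^ s) ^ length (filter (\<lambda>y. y = m) ys) = Wt s ys"
  by (induction ys) auto

definition SL :: "nat \<Rightarrow> nat list set" where
  "SL a = {ks. length ks = a \<and> sorted ks \<and> (\<forall>k\<in>set ks. 0 < k)}"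

definition AL :: "nat \<Rightarrow> nat list set" where
  "AL a = {ks. length ks = a \<and> (\<forall>k\<in>set ks. 0 < k)}"

lemma AL_has_sum:
  assumes "s \<ge> 2"
  shows "(Wt s has_sum (rzeta s ^ a)) (AL a)"
proof (induction a)
  case 0
  have "AL 0 = {[]}" by (auto simp: AL_def)
  then show ?case using has_sum_finiteI[of "{[]}" 1 "Wt s"] by simp
next
  case (Suc a)
  have "((\<lambda>(p,q). 1 / real p ^ s * Wt s q) has_sum (rzeta s * rzeta s ^ a)) ({m. 0 < m} \<times> AL a)"
    by (rule has_sum_product_nonneg[OF _ _ rzeta_has_sum[OF assms] Suc]) (auto simp: Wt_nonneg)
  hence "((Wt s \<circ> (\<lambda>(p,q). p # q)) has_sum (rzeta s ^ Suc a)) ({m. 0 < m} \<times> AL a)"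
    by (simp add: o_def split_beta')
  hence "(Wt s has_sum (rzeta s ^ Suc a)) ((\<lambda>(p,q). p # q) ` ({m. 0 < m} \<times> AL a))"
    by (subst has_sum_reindex) (auto simp: inj_on_def)
  moreover have "(\<lambda>(p,q). p # q) ` ({m. 0 < m} \<times> AL a) = AL (Suc a)"
  proof
    show "AL (Suc a) \<subseteq> (\<lambda>(p,q). p # q) ` ({m. 0 < m} \<times> AL a)"
    proof
      fix ks assume "ks \<in> AL (Suc a)"
      then obtain p q where "ks = p # q" "length q = a" "0 < p" "\<forall>k\<in>set q. 0 < k"
        by (cases ks) (auto simp: AL_def)
      then show "ks \<in> (\<lambda>(p,q). p # q) ` ({m. 0 < m} \<times> AL a)"
        by (auto simp: AL_def image_iff)
    qed
  qed (auto simp: AL_def)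
  ultimately show ?case by simp
qed

lemma SL_summable: "s \<ge> 2 \<Longrightarrow> Wt s summable_on SL a"
  by (rule summable_on_subset_banach[OF has_sum_imp_summable[OF AL_has_sum[of s a]]]) (auto simp: SL_def AL_def)


definition chi :: "nat \<Rightarrow> nat \<times> nat list \<times> nat \<Rightarrow> nat \<times> nat list" where
  "chi n x = (case x of (a', C, m) \<Rightarrow>
     (length (filter (\<lambda>x. x \<le> m) C),
      filter (\<lambda>x. x \<le> m) C @ [m] @ replicate (n - a') m @ filter (\<lambda>x. m < x) C))"

definition psi :: "nat \<times> nat list \<Rightarrow> nat \<times> nat list \<times> nat" where
  "psi x = (case x of (a, ks) \<Rightarrow>
     (length (take a ks @ filter (\<lambda>y. y \<noteq> ks ! a) (drop (Suc a) ks)),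
      take a ks @ filter (\<lambda>y. y \<noteq> ks ! a) (drop (Suc a) ks), ks ! a))"

lemma len_split: "length (filter (\<lambda>x. x \<le> m) (C::nat list)) + length (filter (\<lambda>x. m < x) C) = length C"
  by (induction C) auto

lemma psi_chi:
  assumes "C \<in> SL a'"
  shows "psi (chi n (a', C, m)) = (a', C, m)"
proof -
  define A where "A = filter (\<lambda>x. x \<le> m) C"
  define B where "B = replicate (n - a') m @ filter (\<lambda>x. m < x) C"
  have ks: "chi n (a', C, m) = (length A, A @ m # B)" by (simp add: chi_def A_def B_def)
  have 1: "(A @ m # B) ! length A = m" by (simp add: nth_append)
  have 2: "take (length A) (A @ m # B) = A" by simp
  have 3: "drop (Suc (length A)) (A @ m # B) = B" by simp
  have 4: "filter (\<lambda>y. y \<noteq> m) B = filter (\<lambda>x. m < x) C"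
    by (auto simp: B_def filter_filter intro!: filter_cong)
  have 5: "A @ filter (\<lambda>x. m < x) C = C" using assms split1 by (auto simp: A_def SL_def)
  have "psi (chi n (a', C, m)) = (length (A @ filter (\<lambda>x. m < x) C), A @ filter (\<lambda>x. m < x) C, m)"
    unfolding ks psi_def by (simp only: prod.case 1 2 3 4)
  then show ?thesis using assms by (simp add: 5 SL_def)
qed

lemma chi_mem:
  assumes "a' \<le> n" "C \<in> SL a'" "0 < m"
  shows "chi n (a', C, m) \<in> {..n} \<times> SL (Suc n)"
proof -
  have l: "length (filter (\<lambda>x. x \<le> m) C) + length (filter (\<lambda>x. m < x) C) = a'"
    using len_split[of m C] assms by (simp add: SL_def)
  have s: "sorted C" and p: "\<forall>k\<in>set C. 0 < k" using assms by (auto simp: SL_def)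
  have "sorted (filter (\<lambda>x. x \<le> m) C @ [m] @ replicate (n - a') m @ filter (\<lambda>x. m < x) C)"
    using s by (auto simp: sorted_append sorted_wrt_filter)
  then show ?thesis using assms l p by (auto simp: chi_def SL_def)
qed

lemma sorted_split_facts:
  assumes "sorted ks" "a < length ks"
  shows "ks = take a ks @ ks ! a # drop (Suc a) ks"
    and "\<forall>x\<in>set (take a ks). x \<le> ks ! a"
    and "\<forall>y\<in>set (drop (Suc a) ks). ks ! a \<le> y"
    and "sorted (take a ks)" "sorted (drop (Suc a) ks)"
proof -
  show e: "ks = take a ks @ ks ! a # drop (Suc a) ks" using assms by (simp add: id_take_nth_drop)
  have "sorted (take a ks @ ks ! a # drop (Suc a) ks)" using assms e by metis
  then show "\<forall>x\<in>set (take a ks). x \<le> ks ! a" "\<forall>y\<in>set (drop (Suc a) ks). ks ! a \<le> y"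
    "sorted (take a ks)" "sorted (drop (Suc a) ks)"
    by (auto simp: sorted_append)
qed

lemma chi_psi:
  assumes "a \<le> n" "ks \<in> SL (Suc n)"
  shows "chi n (psi (a, ks)) = (a, ks)"
proof -
  define xs where "xs = take a ks"
  define m where "m = ks ! a"
  define ys where "ys = drop (Suc a) ks"
  have L: "length ks = Suc n" "sorted ks" using assms by (auto simp: SL_def)
  have al: "a < length ks" using assms L by simp
  note F = sorted_split_facts[OF L(2) al, folded xs_def m_def ys_def]
  have lx: "length xs = a" using al by (simp add: xs_def)
  have ly: "length ys = n - a" using L by (simp add: ys_def)
  have p: "psi (a, ks) = (length (xs @ filter (\<lambda>y. y \<noteq> m) ys), xs @ filter (\<lambda>y. y \<noteq> m) ys, m)"
    by (simp add: psi_def xs_def ys_def m_def)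
  have f1: "filter (\<lambda>x. x \<le> m) (xs @ filter (\<lambda>y. y \<noteq> m) ys) = xs"
  proof -
    have "filter (\<lambda>x. x \<le> m) xs = xs" using F(2) by (simp add: filter_id_conv)
    moreover have "filter (\<lambda>x. x \<le> m) (filter (\<lambda>y. y \<noteq> m) ys) = []"
      using F(3) by (force simp: filter_empty_conv)
    ultimately show ?thesis by simp
  qed
  have f2: "filter (\<lambda>x. m < x) (xs @ filter (\<lambda>y. y \<noteq> m) ys) = filter (\<lambda>x. m < x) ys"
  proof -
    have "filter (\<lambda>x. m < x) xs = []" using F(2) by (force simp: filter_empty_conv)
    moreover have "filter (\<lambda>x. m < x) (filter (\<lambda>y. y \<noteq> m) ys) = filter (\<lambda>x. m < x) ys"
      by (auto simp: filter_filter intro!: filter_cong)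
    ultimately show ?thesis by simp
  qed
  have lf: "length (filter (\<lambda>y. y \<noteq> m) ys) + length (filter (\<lambda>y. y = m) ys) = length ys"
    using sum_length_filter_compl[of "\<lambda>y. y = m" ys] by simp
  have f3: "n - length (xs @ filter (\<lambda>y. y \<noteq> m) ys) = length (filter (\<lambda>y. y = m) ys)"
    using lx ly lf assms(1) by simp
  have "replicate (length (filter (\<lambda>y. y = m) ys)) m @ filter (\<lambda>y. m < y) ys = ys"
    using split2 F(3,5) by blast
  moreover have "chi n (psi (a, ks)) = (length xs, xs @ [m] @ replicate (length (filter (\<lambda>y. y = m) ys)) m @ filter (\<lambda>y. m < y) ys)"
    unfolding p chi_def by (simp only: prod.case f1 f2 f3)
  ultimately show ?thesis using F(1) lx by simp
qed

lemma psi_mem: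
  assumes "a \<le> n" "ks \<in> SL (Suc n)"
  shows "psi (a, ks) \<in> Sigma {..n} (\<lambda>a. SL a \<times> {m. 0 < m})"
proof -
  define xs where "xs = take a ks"
  define m where "m = ks ! a"
  define ys where "ys = drop (Suc a) ks"
  have L: "length ks = Suc n" "sorted ks" "\<forall>k\<in>set ks. 0 < k" using assms by (auto simp: SL_def)
  have al: "a < length ks" using assms L by simp
  note F = sorted_split_facts[OF L(2) al, folded xs_def m_def ys_def]
  have lx: "length xs = a" using al by (simp add: xs_def)
  have ly: "length ys = n - a" using L by (simp add: ys_def)
  have p: "psi (a, ks) = (length (xs @ filter (\<lambda>y. y \<noteq> m) ys), xs @ filter (\<lambda>y. y \<noteq> m) ys, m)"
    by (simp add: psi_def xs_def ys_def m_def)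
  have "length (filter (\<lambda>y. y \<noteq> m) ys) \<le> length ys" by simp
  hence len: "length (xs @ filter (\<lambda>y. y \<noteq> m) ys) \<le> n" using lx ly assms by simp
  have srt: "sorted (xs @ filter (\<lambda>y. y \<noteq> m) ys)"
    using F(2-5) by (auto simp: sorted_append sorted_wrt_filter intro: order.trans)
  have "set ks = set xs \<union> {m} \<union> set ys" using F(1) by (metis Un_insert_right insert_is_Un set_append set_simps(2) sup_commute)
  hence pos: "\<forall>k\<in>set xs. 0 < k" "0 < m" "\<forall>k\<in>set ys. 0 < k" using L(3) by auto
  show ?thesis unfolding p using len srt pos by (auto simp: SL_def)
qed

lemma chi_weight:
  assumes "a' \<le> n" "C \<in> SL a'"
  shows "(case chi n (a', C, m) of (a, ks) \<Rightarrow>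
            (\<Prod>i<length (replicate a s @ [r] @ replicate (n - a) s).
               1 / real (ks ! i) ^ ((replicate a s @ [r] @ replicate (n - a) s) ! i)))
         = Wt s C * (1 / real m ^ (s * (n - a') + r))"
proof -
  define A where "A = filter (\<lambda>x. x \<le> m) C"
  define P where "P = filter (\<lambda>x. m < x) C"
  define B where "B = replicate (n - a') m @ P"
  have ks: "chi n (a', C, m) = (length A, A @ [m] @ B)" by (simp add: chi_def A_def B_def P_def)
  have lC: "length C = a'" "sorted C" using assms by (auto simp: SL_def)
  have l: "length A + length P = a'" using len_split[of m C] lC by (simp add: A_def P_def)
  have lB: "length B = n - length A" using l assms by (simp add: B_def)
  have C: "A @ P = C" using split1[OF lC(2)] by (simp add: A_def P_def)
  have "(case chi n (a', C, m) of (a, ks) \<Rightarrow>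
            (\<Prod>i<length (replicate a s @ [r] @ replicate (n - a) s).
               1 / real (ks ! i) ^ ((replicate a s @ [r] @ replicate (n - a) s) ! i)))
        = Wt s A * (1 / real m ^ r) * Wt s B"
    unfolding ks by (simp only: prod.case W2[OF refl lB])
  also have "\<dots> = Wt s (A @ P) * ((1 / real m ^ s) ^ (n - a') * (1 / real m ^ r))"
    by (simp add: B_def)
  also have "\<dots> = Wt s C * (1 / real m ^ (s * (n - a') + r))"
    by (simp add: C power_add power_mult power_one_over)
  finally show ?thesis .
qed


theorem proposition4p1:
  fixes n s r :: nat
  assumes "s \<ge> 2" and "r \<ge> 2"
  shows "(\<Sum>a\<le>n. zeta_star (replicate a s) * rzeta (s * (n - a) + r))
       = (\<Sum>a\<le>n. zeta_star (replicate a s @ [r] @ replicate (n - a) s))"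
proof -
  define LS where "LS = Sigma {..n} (\<lambda>a. SL a \<times> {m::nat. 0 < m})"
  define RS where "RS = {..n} \<times> SL (Suc n)"
  define G where "G = (\<lambda>(a::nat, C, m::nat). Wt s C * (1 / real m ^ (s * (n - a) + r)))"
  define E where "E = (\<lambda>a. replicate a s @ [r] @ replicate (n - a) s)"
  define F where "F = (\<lambda>(a, ks::nat list). (\<Prod>i<length (E a). 1 / real (ks ! i) ^ (E a ! i)))"
  have Z: "(Wt s has_sum zeta_star (replicate a s)) (SL a)" for a
  proof -
    have e: "{ks. length ks = length (replicate a s) \<and> sorted ks \<and> (\<forall>k\<in>set ks. 0 < k)} = SL a"
      by (simp add: SL_def)
    have "zeta_star (replicate a s) = infsum (\<lambda>ks. \<Prod>i<length (replicate a s). 1 / real (ks ! i) ^ (replicate a s ! i)) (SL a)"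
      unfolding zeta_star_def e ..
    also have "\<dots> = infsum (Wt s) (SL a)"
      by (rule infsum_cong) (rule W1, simp add: SL_def)
    finally have "zeta_star (replicate a s) = infsum (Wt s) (SL a)" .
    then show ?thesis using SL_summable[OF assms(1)] by (simp add: has_sum_iff)
  qed
  have G1: "(G has_sum (zeta_star (replicate a s) * rzeta (s * (n - a) + r))) (Pair a ` (SL a \<times> {m. 0 < m}))"
    for a
  proof -
    have "((\<lambda>(p,q). Wt s p * (1 / real q ^ (s * (n - a) + r))) has_sum
            (zeta_star (replicate a s) * rzeta (s * (n - a) + r))) (SL a \<times> {m. 0 < m})"
      by (rule has_sum_product_nonneg[OF _ _ Z rzeta_has_sum]) (use assms in \<open>auto simp: Wt_nonneg\<close>)
    hence "((G \<circ> Pair a) has_sum (zeta_star (replicate a s) * rzeta (s * (n - a) + r))) (SL a \<times> {m. 0 < m})"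
      by (simp add: G_def o_def case_prod_beta split_beta')
    then show ?thesis by (subst has_sum_reindex) (auto simp: inj_on_def)
  qed
  have "(G has_sum (\<Sum>a\<le>n. zeta_star (replicate a s) * rzeta (s * (n - a) + r)))
          (\<Union>a\<in>{..n}. Pair a ` (SL a \<times> {m. 0 < m}))"
    by (rule sum_has_sum) (use G1 in auto)
  moreover have "(\<Union>a\<in>{..n}. Pair a ` (SL a \<times> {m. 0 < m})) = LS" unfolding LS_def by auto
  ultimately have hG: "(G has_sum (\<Sum>a\<le>n. zeta_star (replicate a s) * rzeta (s * (n - a) + r))) LS"
    by simp
  have "(G has_sum (\<Sum>a\<le>n. zeta_star (replicate a s) * rzeta (s * (n - a) + r))) LS =
        (F has_sum (\<Sum>a\<le>n. zeta_star (replicate a s) * rzeta (s * (n - a) + r))) RS"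
  proof (rule has_sum_reindex_bij_witness[where i = psi and j = "chi n"])
    show "\<And>x. x \<in> LS \<Longrightarrow> psi (chi n x) = x" unfolding LS_def using psi_chi by auto
    show "\<And>x. x \<in> LS \<Longrightarrow> chi n x \<in> RS" unfolding LS_def RS_def using chi_mem by auto
    show "\<And>y. y \<in> RS \<Longrightarrow> chi n (psi y) = y" unfolding RS_def using chi_psi by auto
    show "\<And>y. y \<in> RS \<Longrightarrow> psi y \<in> LS" unfolding RS_def LS_def using psi_mem by auto
    show "\<And>x. x \<in> LS \<Longrightarrow> F (chi n x) = G x"
      unfolding LS_def F_def G_def E_def using chi_weight by auto
  qed simp
  with hG have hF: "(F has_sum (\<Sum>a\<le>n. zeta_star (replicate a s) * rzeta (s * (n - a) + r))) RS"
    by simp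
  have F1: "(F has_sum zeta_star (E a)) (Pair a ` SL (Suc n))" if a: "a \<le> n" for a
  proof -
    have "F summable_on (Pair a ` SL (Suc n))"
      using hF by (rule summable_on_subset_banach[OF has_sum_imp_summable]) (use a in \<open>auto simp: RS_def\<close>)
    hence "(F \<circ> Pair a) summable_on SL (Suc n)" by (subst (asm) summable_on_reindex) (auto simp: inj_on_def)
    moreover have "infsum (F \<circ> Pair a) (SL (Suc n)) = zeta_star (E a)"
      unfolding zeta_star_def SL_def F_def o_def using a by (simp add: E_def)
    ultimately have "((F \<circ> Pair a) has_sum zeta_star (E a)) (SL (Suc n))" by (simp add: has_sum_iff)
    then show ?thesis by (subst has_sum_reindex) (auto simp: inj_on_def)
  qed
  have "(F has_sum (\<Sum>a\<le>n. zeta_star (E a))) (\<Union>a\<in>{..n}. Pair a ` SL (Suc n))"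
    by (rule sum_has_sum) (use F1 in auto)
  moreover have "(\<Union>a\<in>{..n}. Pair a ` SL (Suc n)) = RS" unfolding RS_def by auto
  ultimately have "(F has_sum (\<Sum>a\<le>n. zeta_star (E a))) RS" by simp
  with hF show ?thesis unfolding E_def using has_sum_unique by blast
qed

end
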